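(* Let $(M,d)$ and $(N,\rho)$ be complete pointed metric spaces. The set $\widehat{\mathrm{Lip}}_0(M,N):=\{\widehat f: f\in\mathrm{Lip}_0(M,N)\}$ is a closed subset of $\mathcal L(\mathcal F(M),\mathcal F(N))$ with respect to the weak operator topology; in particular it is also closed with respect to the strong operator topology.
   Context: A pointed metric space is a metric space with a distinguished point $0$. $\mathrm{Lip}_0(M,N)$ denotes the Lipschitz maps $f:M\to N$ with $f(0_M)=0_N$; $\mathrm{Lip}_0(M)=\mathrm{Lip}_0(M,\mathbb R)$ normed by the Lipschitz constant. $\delta_M:M\to\mathrm{Lip}_0(M)^*$, $\delta_M(x)(\varphi)=\varphi(x)$; $\mathcal F(M)$ is the norm-closed linear span of $\delta_M(M)$. For $f\in\mathrm{Lip}_0(M,N)$, $\widehat f:\mathcal F(M)\to\mathcal F(N)$ is the unique bounded linear operator with $\widehat f(\delta_M(x))=\delta_N(f(x))$. The weak operator topology on $\mathcal L(X,Y)$ is the topology of pointwise convergence of $T\mapsto\langle y^*,Tx\rangle$ for $x\in X$, $y^*\in Y^*$; the strong operator topology is that of pointwise norm convergence $T\mapsto Tx$. *)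

theory Defs
  imports "HOL-Analysis.Analysis"
begin

text \<open>Elements of the dual of Lip_0(M) are represented as functionals on real-valued
functions on M; we normalise them to vanish outside Lip_0(M).\<close>

type_synonym 'a functional = "('a \<Rightarrow> real) \<Rightarrow> real"

definition Lip0_maps :: "'a::metric_space \<Rightarrow> 'b::metric_space \<Rightarrow> ('a \<Rightarrow> 'b) set" where
  "Lip0_maps z0 w0 = {f. (\<exists>C. C-lipschitz_on UNIV f) \<and> f z0 = w0}"

definition Lip0 :: "'a::metric_space \<Rightarrow> ('a \<Rightarrow> real) set" where
  "Lip0 z0 = Lip0_maps z0 0"

definition lipnorm :: "('a::metric_space \<Rightarrow> real) \<Rightarrow> real" where
  "lipnorm f = Sup (insert 0 {\<bar>f x - f y\<bar> / dist x y | x y. x \<noteq> y})"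

definition dirac :: "'a::metric_space \<Rightarrow> 'a \<Rightarrow> 'a functional" where
  "dirac z0 x = (\<lambda>f. if f \<in> Lip0 z0 then f x else 0)"

definition molspan :: "'a::metric_space \<Rightarrow> 'a functional set" where
  "molspan z0 = {\<phi>. \<exists>A c. finite A \<and> \<phi> = (\<lambda>f. \<Sum>x\<in>A. c x * dirac z0 x f)}"

text \<open>The Lipschitz-free space F(M): the dual-norm closure of molspan inside Lip_0(M)^*.\<close>
definition free :: "'a::metric_space \<Rightarrow> 'a functional set" where
  "free z0 = {\<phi>. (\<forall>f. f \<notin> Lip0 z0 \<longrightarrow> \<phi> f = 0) \<and>
      (\<forall>\<epsilon>>0. \<exists>\<psi>\<in>molspan z0. \<forall>f\<in>Lip0 z0. \<bar>\<phi> f - \<psi> f\<bar> \<le> \<epsilon> * lipnorm f)}"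

definition fnorm :: "'a::metric_space \<Rightarrow> 'a functional \<Rightarrow> real" where
  "fnorm z0 \<phi> = Sup {\<bar>\<phi> f\<bar> | f. f \<in> Lip0 z0 \<and> lipnorm f \<le> 1}"

text \<open>Bounded linear operators F(M) -> F(N) (values outside F(M) are irrelevant).\<close>
definition bounded_op :: "'a::metric_space \<Rightarrow> 'b::metric_space
    \<Rightarrow> ('a functional \<Rightarrow> 'b functional) \<Rightarrow> bool" where
  "bounded_op z0 w0 T \<longleftrightarrow>
     (\<forall>\<phi>\<in>free z0. T \<phi> \<in> free w0) \<and>
     (\<forall>\<phi>\<in>free z0. \<forall>\<psi>\<in>free z0. \<forall>a b.
        T (\<lambda>f. a * \<phi> f + b * \<psi> f) = (\<lambda>g. a * T \<phi> g + b * T \<psi> g)) \<and>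
     (\<exists>C. \<forall>\<phi>\<in>free z0. fnorm w0 (T \<phi>) \<le> C * fnorm z0 \<phi>)"

definition free_dual :: "'b::metric_space \<Rightarrow> ('b functional \<Rightarrow> real) set" where
  "free_dual w0 = {y. (\<forall>\<phi>\<in>free w0. \<forall>\<psi>\<in>free w0. \<forall>a b.
        y (\<lambda>f. a * \<phi> f + b * \<psi> f) = a * y \<phi> + b * y \<psi>) \<and>
     (\<exists>C. \<forall>\<phi>\<in>free w0. \<bar>y \<phi>\<bar> \<le> C * fnorm w0 \<phi>)}"

text \<open>T is (on F(M)) the linearisation f-hat of f: the bounded linear operator with
  T(delta_M x) = delta_N(f x).  Such an operator is unique on F(M).\<close>
definition is_hat :: "'a::metric_space \<Rightarrow> 'b::metric_space \<Rightarrow> ('a \<Rightarrow> 'b)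
    \<Rightarrow> ('a functional \<Rightarrow> 'b functional) \<Rightarrow> bool" where
  "is_hat z0 w0 f T \<longleftrightarrow> bounded_op z0 w0 T \<and> (\<forall>x. T (dirac z0 x) = dirac w0 (f x))"

definition in_WOT_closure_hat :: "'a::metric_space \<Rightarrow> 'b::metric_space
    \<Rightarrow> ('a functional \<Rightarrow> 'b functional) \<Rightarrow> bool" where
  "in_WOT_closure_hat z0 w0 T \<longleftrightarrow>
     (\<forall>P \<epsilon>. finite P \<and> P \<subseteq> free z0 \<times> free_dual w0 \<and> \<epsilon> > 0 \<longrightarrow>
        (\<exists>f S. f \<in> Lip0_maps z0 w0 \<and> is_hat z0 w0 f S \<and>
           (\<forall>(\<phi>, y)\<in>P. \<bar>y (T \<phi>) - y (S \<phi>)\<bar> < \<epsilon>)))"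

definition in_SOT_closure_hat :: "'a::metric_space \<Rightarrow> 'b::metric_space
    \<Rightarrow> ('a functional \<Rightarrow> 'b functional) \<Rightarrow> bool" where
  "in_SOT_closure_hat z0 w0 T \<longleftrightarrow>
     (\<forall>X \<epsilon>. finite X \<and> X \<subseteq> free z0 \<and> \<epsilon> > 0 \<longrightarrow>
        (\<exists>f S. f \<in> Lip0_maps z0 w0 \<and> is_hat z0 w0 f S \<and>
           (\<forall>\<phi>\<in>X. fnorm w0 (\<lambda>g. T \<phi> g - S \<phi> g) < \<epsilon>)))"

end

theory Submission imports Defs begin

lemma Lip0I:
  assumes "\<And>x y. \<bar>f x - f y\<bar> \<le> K * dist x y" "0 \<le> K" "f z0 = 0"
  shows "f \<in> Lip0 z0"
  unfolding Lip0_def Lip0_maps_def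
  using assms by (auto intro!: exI[of _ K] lipschitz_onI simp: dist_real_def)

lemma Lip0ex:
  assumes "f \<in> Lip0 z0"
  shows "\<exists>K. 0 \<le> K \<and> (\<forall>x y. \<bar>f x - f y\<bar> \<le> K * dist x y)"
  using assms unfolding Lip0_def Lip0_maps_def
  by (auto simp: dist_real_def lipschitz_on_def)

lemma Lip0_base: "f \<in> Lip0 z0 \<Longrightarrow> f z0 = 0"
  unfolding Lip0_def Lip0_maps_def by simp

lemma lipnorm_bdd:
  assumes "f \<in> Lip0 z0"
  shows "bdd_above (insert 0 {\<bar>f x - f y\<bar> / dist x y | x y. x \<noteq> y})"
proof -
  obtain K where K: "0 \<le> K" "\<And>x y. \<bar>f x - f y\<bar> \<le> K * dist x y" using Lip0ex[OF assms] by blast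
  have "\<bar>f x - f y\<bar> / dist x y \<le> K" if "x \<noteq> y" for x y
    using K(2)[of x y] that by (simp add: divide_le_eq)
  then show ?thesis using K(1) by (auto intro!: bdd_aboveI[of _ K])
qed

lemma lipnorm_nonneg: "f \<in> Lip0 z0 \<Longrightarrow> 0 \<le> lipnorm f"
  unfolding lipnorm_def by (rule cSup_upper[OF _ lipnorm_bdd]) auto

lemma lipnorm_le:
  assumes "f \<in> Lip0 z0"
  shows "\<bar>f x - f y\<bar> \<le> lipnorm f * dist x y"
proof (cases "x = y")
  case False
  have "\<bar>f x - f y\<bar> / dist x y \<le> lipnorm f"
    unfolding lipnorm_def by (rule cSup_upper[OF _ lipnorm_bdd[OF assms]]) (use False in auto)
  then show ?thesis using False by (simp add: divide_le_eq mult.commute)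
qed simp

lemma lipnorm_leI:
  assumes "\<And>x y. \<bar>f x - f y\<bar> \<le> K * dist x y" "0 \<le> K"
  shows "lipnorm f \<le> K"
  unfolding lipnorm_def
proof (rule cSup_least)
  fix r assume "r \<in> insert 0 {\<bar>f x - f y\<bar> / dist x y | x y. x \<noteq> y}"
  then show "r \<le> K" using assms by (auto simp: divide_le_eq)
qed auto

lemma dirac_Lip0: "g \<in> Lip0 z0 \<Longrightarrow> dirac z0 x g = g x"
  by (simp add: dirac_def)

lemma molspan_dirac: "dirac z0 x \<in> molspan z0"
  unfolding molspan_def by (intro CollectI exI[of _ "{x}"] exI[of _ "\<lambda>_. 1"]) auto

lemma dirac_free: "dirac z0 x \<in> free z0"
  unfolding free_def
proof (intro CollectI conjI allI impI)
  fix e :: real assume "0 < e"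
  then show "\<exists>\<psi>\<in>molspan z0. \<forall>f\<in>Lip0 z0. \<bar>dirac z0 x f - \<psi> f\<bar> \<le> e * lipnorm f"
    by (intro bexI[OF _ molspan_dirac[of z0 x]]) (auto intro!: lipnorm_nonneg mult_nonneg_nonneg)
qed (auto simp: dirac_def)

lemma free_out: "\<phi> \<in> free z0 \<Longrightarrow> f \<notin> Lip0 z0 \<Longrightarrow> \<phi> f = 0"
  unfolding free_def by auto

lemma free_approx:
  assumes "\<phi> \<in> free z0" "e > 0"
  obtains A c where "finite A" "\<And>f. f \<in> Lip0 z0 \<Longrightarrow> \<bar>\<phi> f - (\<Sum>x\<in>A. c x * f x)\<bar> \<le> e * lipnorm f"
proof -
  obtain \<psi> where "\<psi> \<in> molspan z0" "\<forall>f\<in>Lip0 z0. \<bar>\<phi> f - \<psi> f\<bar> \<le> e * lipnorm f"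
    using assms unfolding free_def by auto
  then obtain A c where "finite A" "\<psi> = (\<lambda>f. \<Sum>x\<in>A. c x * dirac z0 x f)" "\<forall>f\<in>Lip0 z0. \<bar>\<phi> f - \<psi> f\<bar> \<le> e * lipnorm f"
    unfolding molspan_def by auto
  then show ?thesis using that[of A c] by (auto simp: dirac_Lip0)
qed

lemma Lip0_scale: "g \<in> Lip0 z0 \<Longrightarrow> (\<lambda>z. c * g z) \<in> Lip0 z0"
proof -
  assume "g \<in> Lip0 z0"
  then obtain K where K: "0 \<le> K" "\<And>x y. \<bar>g x - g y\<bar> \<le> K * dist x y" "g z0 = 0" using Lip0ex[OF \<open>g \<in> Lip0 z0\<close>] Lip0_base[OF \<open>g \<in> Lip0 z0\<close>] by blast
  show ?thesis
  proof (rule Lip0I[of _ "\<bar>c\<bar> * K"])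
    fix x y
    have "\<bar>c * g x - c * g y\<bar> = \<bar>c\<bar> * \<bar>g x - g y\<bar>" by (simp add: abs_mult[symmetric] right_diff_distrib)
    also have "\<dots> \<le> \<bar>c\<bar> * (K * dist x y)" by (rule mult_left_mono[OF K(2)]) auto
    finally show "\<bar>c * g x - c * g y\<bar> \<le> \<bar>c\<bar> * K * dist x y" by simp
  qed (use K in auto)
qed

lemma free_hom:
  assumes "\<phi> \<in> free z0" "g \<in> Lip0 z0"
  shows "\<phi> (\<lambda>z. c * g z) = c * \<phi> g"
proof -
  let ?cg = "\<lambda>z. c * g z"
  have cg: "?cg \<in> Lip0 z0" by (rule Lip0_scale[OF assms(2)])
  let ?K = "lipnorm ?cg + \<bar>c\<bar> * lipnorm g"
  have *: "\<bar>\<phi> ?cg - c * \<phi> g\<bar> \<le> e * ?K" if e: "e > 0" for e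
  proof -
    obtain A a where A: "finite A" "\<And>f. f \<in> Lip0 z0 \<Longrightarrow> \<bar>\<phi> f - (\<Sum>x\<in>A. a x * f x)\<bar> \<le> e * lipnorm f"
      using free_approx[OF assms(1) e] by blast
    have s: "(\<Sum>x\<in>A. a x * ?cg x) = c * (\<Sum>x\<in>A. a x * g x)"
      by (simp add: sum_distrib_left algebra_simps)
    have "\<bar>\<phi> ?cg - c * \<phi> g\<bar> \<le> \<bar>\<phi> ?cg - (\<Sum>x\<in>A. a x * ?cg x)\<bar> + \<bar>c\<bar> * \<bar>\<phi> g - (\<Sum>x\<in>A. a x * g x)\<bar>"
      unfolding s abs_mult[symmetric] by (simp add: algebra_simps abs_triangle_ineq4)
    also have "\<dots> \<le> e * lipnorm ?cg + \<bar>c\<bar> * (e * lipnorm g)"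
      by (intro add_mono mult_left_mono A(2) cg assms(2)) auto
    finally show ?thesis by (simp add: algebra_simps)
  qed
  have K0: "0 \<le> ?K" using lipnorm_nonneg[OF cg] lipnorm_nonneg[OF assms(2)] by simp
  have "\<bar>\<phi> ?cg - c * \<phi> g\<bar> \<le> 0"
  proof (rule field_le_epsilon)
    fix e :: real assume e: "0 < e"
    have "\<bar>\<phi> ?cg - c * \<phi> g\<bar> \<le> (e / (?K + 1)) * ?K" using e K0 by (intro *) auto
    also have "\<dots> \<le> e" using e K0 by (simp add: field_simps)
    finally show "\<bar>\<phi> ?cg - c * \<phi> g\<bar> \<le> 0 + e" by simp
  qed
  then show ?thesis by simp
qed


lemma Lip0_zero: "(\<lambda>_. 0) \<in> Lip0 z0"
  by (rule Lip0I[of _ 0]) auto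

lemma lipnorm_zero: "lipnorm (\<lambda>_. 0::real) \<le> 1"
  by (rule lipnorm_leI) auto

lemma free_bdd:
  assumes "\<phi> \<in> free z0"
  shows "bdd_above {\<bar>\<phi> f\<bar> | f. f \<in> Lip0 z0 \<and> lipnorm f \<le> 1}"
proof -
  obtain A a where A: "finite A" "\<And>f. f \<in> Lip0 z0 \<Longrightarrow> \<bar>\<phi> f - (\<Sum>x\<in>A. a x * f x)\<bar> \<le> 1 * lipnorm f"
    using free_approx[OF assms, of 1] by auto
  have "\<bar>\<phi> f\<bar> \<le> (\<Sum>x\<in>A. \<bar>a x\<bar> * dist x z0) + 1" if f: "f \<in> Lip0 z0" "lipnorm f \<le> 1" for f
  proof -
    have fz: "f z0 = 0" using f(1) by (rule Lip0_base)
    have "\<bar>f x\<bar> \<le> dist x z0" for x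
    proof -
      have "\<bar>f x - f z0\<bar> \<le> lipnorm f * dist x z0" by (rule lipnorm_le[OF f(1)])
      also have "\<dots> \<le> 1 * dist x z0" by (rule mult_right_mono[OF f(2)]) auto
      finally show ?thesis using fz by simp
    qed
    then have "\<bar>\<Sum>x\<in>A. a x * f x\<bar> \<le> (\<Sum>x\<in>A. \<bar>a x\<bar> * dist x z0)"
      by (intro order.trans[OF sum_abs] sum_mono) (auto simp: abs_mult intro: mult_left_mono)
    moreover have "\<bar>\<phi> f - (\<Sum>x\<in>A. a x * f x)\<bar> \<le> 1" using A(2)[OF f(1)] f(2) by simp
    ultimately show ?thesis by linarith
  qed
  then show ?thesis by (auto intro!: bdd_aboveI)
qed

lemma fnorm_ge:
  assumes "\<phi> \<in> free z0" "f \<in> Lip0 z0" "lipnorm f \<le> 1"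
  shows "\<bar>\<phi> f\<bar> \<le> fnorm z0 \<phi>"
  unfolding fnorm_def by (rule cSup_upper[OF _ free_bdd[OF assms(1)]]) (use assms in auto)

lemma fnorm_nonneg: "\<phi> \<in> free z0 \<Longrightarrow> 0 \<le> fnorm z0 \<phi>"
  using fnorm_ge[OF _ Lip0_zero lipnorm_zero] by (meson abs_ge_zero order_trans)

lemma free_eval_le:
  assumes "\<phi> \<in> free z0" "g \<in> Lip0 z0"
  shows "\<bar>\<phi> g\<bar> \<le> lipnorm g * fnorm z0 \<phi>"
proof (cases "lipnorm g = 0")
  case True
  have gz: "g z0 = 0" using assms(2) by (rule Lip0_base)
  have g0: "g x = 0" for x using lipnorm_le[OF assms(2), of x z0] True gz by simp
  obtain A a where A: "finite A" "\<And>f. f \<in> Lip0 z0 \<Longrightarrow> \<bar>\<phi> f - (\<Sum>x\<in>A. a x * f x)\<bar> \<le> 1 * lipnorm f"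
    using free_approx[OF assms(1), of 1] by auto
  from A(2)[OF assms(2)] show ?thesis by (simp add: g0 True)
next
  case False
  define L where "L = lipnorm g"
  have L: "L > 0" using False lipnorm_nonneg[OF assms(2)] unfolding L_def by simp
  let ?g = "\<lambda>z. (1 / L) * g z"
  have g': "?g \<in> Lip0 z0" by (rule Lip0_scale[OF assms(2)])
  have "lipnorm ?g \<le> 1"
  proof (rule lipnorm_leI)
    fix x y
    have "\<bar>?g x - ?g y\<bar> = \<bar>g x - g y\<bar> / L" using L by (simp add: field_simps abs_div)
    also have "\<dots> \<le> (L * dist x y) / L" using lipnorm_le[OF assms(2), of x y] L unfolding L_def
      by (intro divide_right_mono) auto
    finally show "\<bar>?g x - ?g y\<bar> \<le> 1 * dist x y" using L by simp
  qed simp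
  then have "\<bar>\<phi> ?g\<bar> \<le> fnorm z0 \<phi>" by (rule fnorm_ge[OF assms(1) g'])
  moreover have "\<phi> ?g = (1 / L) * \<phi> g" by (rule free_hom[OF assms])
  ultimately have "\<bar>\<phi> g\<bar> / L \<le> fnorm z0 \<phi>" using L by (simp add: abs_mult)
  then show ?thesis using L unfolding L_def by (simp add: divide_le_eq mult.commute)
qed

lemma molspan_lin:
  assumes "\<phi> \<in> molspan z0" "\<psi> \<in> molspan z0"
  shows "(\<lambda>f. a * \<phi> f + b * \<psi> f) \<in> molspan z0"
proof -
  obtain A c where A: "finite A" "\<phi> = (\<lambda>f. \<Sum>x\<in>A. c x * dirac z0 x f)" using assms(1) unfolding molspan_def by auto
  obtain B d where B: "finite B" "\<psi> = (\<lambda>f. \<Sum>x\<in>B. d x * dirac z0 x f)" using assms(2) unfolding molspan_def by auto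
  show ?thesis unfolding molspan_def
  proof (intro CollectI exI conjI)
    show "finite (A \<union> B)" using A B by simp
    show "(\<lambda>f. a * \<phi> f + b * \<psi> f) = (\<lambda>f. \<Sum>x\<in>A \<union> B. (a * (if x \<in> A then c x else 0) + b * (if x \<in> B then d x else 0)) * dirac z0 x f)"
    proof
      fix f
      have e1: "(\<Sum>x\<in>A \<union> B. (if x \<in> A then c x else 0) * dirac z0 x f) = (\<Sum>x\<in>A. c x * dirac z0 x f)"
        using A(1) B(1) by (intro sum.mono_neutral_cong_right) auto
      have e2: "(\<Sum>x\<in>A \<union> B. (if x \<in> B then d x else 0) * dirac z0 x f) = (\<Sum>x\<in>B. d x * dirac z0 x f)"
        using A(1) B(1) by (intro sum.mono_neutral_cong_right) auto
      show "a * \<phi> f + b * \<psi> f = (\<Sum>x\<in>A \<union> B. (a * (if x \<in> A then c x else 0) + b * (if x \<in> B then d x else 0)) * dirac z0 x f)"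
        unfolding A(2) B(2) by (simp add: distrib_right sum.distrib mult.assoc sum_distrib_left[symmetric] e1 e2 del: if_distrib)
    qed
  qed
qed


lemma free_lin:
  assumes "\<phi> \<in> free z0" "\<psi> \<in> free z0"
  shows "(\<lambda>f. a * \<phi> f + b * \<psi> f) \<in> free z0"
  unfolding free_def
proof (intro CollectI conjI allI impI)
  fix f assume "f \<notin> Lip0 z0" then show "a * \<phi> f + b * \<psi> f = 0" using assms by (simp add: free_out)
next
  fix e :: real assume e: "0 < e"
  define e' where "e' = e / (\<bar>a\<bar> + \<bar>b\<bar> + 1)"
  have e': "e' > 0" using e unfolding e'_def by (simp add: add_pos_nonneg)
  obtain \<kappa>1 where c1: "\<kappa>1 \<in> molspan z0" "\<forall>f\<in>Lip0 z0. \<bar>\<phi> f - \<kappa>1 f\<bar> \<le> e' * lipnorm f"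
    using assms(1) e' unfolding free_def by blast
  obtain \<kappa>2 where c2: "\<kappa>2 \<in> molspan z0" "\<forall>f\<in>Lip0 z0. \<bar>\<psi> f - \<kappa>2 f\<bar> \<le> e' * lipnorm f"
    using assms(2) e' unfolding free_def by blast
  show "\<exists>\<kappa>\<in>molspan z0. \<forall>f\<in>Lip0 z0. \<bar>a * \<phi> f + b * \<psi> f - \<kappa> f\<bar> \<le> e * lipnorm f"
  proof (intro bexI[OF _ molspan_lin[OF c1(1) c2(1), of a b]] ballI)
    fix f assume f: "f \<in> Lip0 z0"
    have L: "0 \<le> lipnorm f" by (rule lipnorm_nonneg[OF f])
    have "\<bar>a * \<phi> f + b * \<psi> f - (a * \<kappa>1 f + b * \<kappa>2 f)\<bar> \<le> \<bar>a\<bar> * \<bar>\<phi> f - \<kappa>1 f\<bar> + \<bar>b\<bar> * \<bar>\<psi> f - \<kappa>2 f\<bar>"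
      by (simp add: abs_mult[symmetric] algebra_simps)
    also have "\<dots> \<le> \<bar>a\<bar> * (e' * lipnorm f) + \<bar>b\<bar> * (e' * lipnorm f)"
      using c1(2) c2(2) f by (intro add_mono mult_left_mono) auto
    also have "\<dots> = (\<bar>a\<bar> + \<bar>b\<bar>) * e' * lipnorm f" by (simp add: algebra_simps)
    also have "\<dots> \<le> e * lipnorm f"
    proof (rule mult_right_mono[OF _ L])
      show "(\<bar>a\<bar> + \<bar>b\<bar>) * e' \<le> e" using e unfolding e'_def by (simp add: field_simps)
    qed
    finally show "\<bar>a * \<phi> f + b * \<psi> f - (a * \<kappa>1 f + b * \<kappa>2 f)\<bar> \<le> e * lipnorm f" .
  qed
qed

lemma eval_dual: "g \<in> Lip0 w0 \<Longrightarrow> (\<lambda>\<phi>. \<phi> g) \<in> free_dual w0"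
  unfolding free_dual_def using free_eval_le by blast

definition ga :: "'b::metric_space \<Rightarrow> 'b \<Rightarrow> 'b \<Rightarrow> real" where
  "ga w0 a = (\<lambda>z. dist z a - dist w0 a)"

lemma dist_lip: "\<bar>dist x a - dist y a\<bar> \<le> dist x y"
  using abs_dist_diff_le[of x a y] by (simp add: dist_commute)

lemma ga_Lip0: "ga w0 a \<in> Lip0 w0"
  unfolding ga_def by (rule Lip0I[of _ 1]) (simp_all add: dist_lip)

lemma ga_lipnorm: "lipnorm (ga w0 a) \<le> 1"
  unfolding ga_def by (rule lipnorm_leI) (simp_all add: dist_lip)

lemma infdist_lessE:
  assumes "B \<noteq> {}" "infdist y B < r"
  obtains a where "a \<in> B" "dist y a < r"
proof -
  have "bdd_below ((\<lambda>a. dist y a) ` B)" by (auto intro!: bdd_belowI[of _ 0])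
  then show ?thesis using assms that by (auto simp: infdist_notempty cINF_less_iff)
qed

lemma core:
  fixes \<mu> :: "'b::complete_space functional"
  assumes mu: "\<mu> \<in> free w0"
   and ap: "\<And>G \<epsilon>. finite G \<Longrightarrow> G \<subseteq> Lip0 w0 \<Longrightarrow> \<epsilon> > 0 \<Longrightarrow> \<exists>y. \<forall>g\<in>G. \<bar>\<mu> g - g y\<bar> < \<epsilon>"
  shows "\<exists>y0. \<mu> = dirac w0 y0"
proof -
  define F where "F a = \<mu> (ga w0 a) + dist w0 a" for a
  have Fap: "\<exists>y. \<forall>a\<in>B. \<bar>F a - dist y a\<bar> < \<epsilon>" if "finite B" "\<epsilon> > 0" for B \<epsilon>
  proof -
    have "ga w0 ` B \<subseteq> Lip0 w0" using ga_Lip0 by blast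
    have "\<exists>y. \<forall>g\<in>ga w0 ` B. \<bar>\<mu> g - g y\<bar> < \<epsilon>"
      by (rule ap[OF finite_imageI[OF that(1)] \<open>ga w0 ` B \<subseteq> Lip0 w0\<close> that(2)])
    then obtain y where y: "\<forall>g\<in>ga w0 ` B. \<bar>\<mu> g - g y\<bar> < \<epsilon>" by blast
    show ?thesis by (rule exI[of _ y]) (use y in \<open>auto simp: F_def ga_def\<close>)
  qed
  have tri: "dist a b \<le> F a + F b" for a b
  proof (rule field_le_epsilon)
    fix e :: real assume e: "0 < e"
    obtain y where y: "\<forall>c\<in>{a,b}. \<bar>F c - dist y c\<bar> < e/2" using Fap[of "{a,b}" "e/2"] e by (meson finite.emptyI finite_insert half_gt_zero)
    have "dist a b \<le> dist y a + dist y b" by (metis dist_commute dist_triangle)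
    moreover have ya: "\<bar>F a - dist y a\<bar> < e/2" and yb: "\<bar>F b - dist y b\<bar> < e/2" using y by auto
    ultimately show "dist a b \<le> F a + F b + e"
      using abs_less_iff[THEN iffD1, OF ya] abs_less_iff[THEN iffD1, OF yb] by linarith
  qed
  have Fnn: "0 \<le> F a" for a using tri[of a a] by simp
  have small: "\<exists>a. F a < \<epsilon>" if eps: "\<epsilon> > 0" for \<epsilon>
  proof -
    define e where "e = \<epsilon> / 3"
    have e: "e > 0" using eps unfolding e_def by simp
    obtain A c where A: "finite A" "\<And>f. f \<in> Lip0 w0 \<Longrightarrow> \<bar>\<mu> f - (\<Sum>x\<in>A. c x * f x)\<bar> \<le> e * lipnorm f"
      using free_approx[OF mu e] by blast
    define B where "B = insert w0 A"
    have B: "finite B" "B \<noteq> {}" "w0 \<in> B" using A(1) unfolding B_def by auto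
    define h where "h z = infdist z B" for z
    have hL: "h \<in> Lip0 w0" unfolding h_def by (rule Lip0I[of _ 1]) (auto simp: infdist_triangle_abs B(3))
    have hn: "lipnorm h \<le> 1" unfolding h_def by (rule lipnorm_leI) (auto simp: infdist_triangle_abs)
    have "(\<Sum>x\<in>A. c x * h x) = 0" unfolding h_def B_def by (intro sum.neutral) auto
    then have "\<bar>\<mu> h\<bar> \<le> e * lipnorm h" using A(2)[OF hL] by simp
    also have "\<dots> \<le> e" using hn e by (simp add: mult_left_le)
    finally have muh: "\<bar>\<mu> h\<bar> \<le> e" .
    obtain y where y: "\<forall>g\<in>insert h (ga w0 ` B). \<bar>\<mu> g - g y\<bar> < e"
    proof -
      have "insert h (ga w0 ` B) \<subseteq> Lip0 w0" using hL ga_Lip0 by blast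
      moreover have "finite (insert h (ga w0 ` B))" using B(1) by simp
      ultimately have "\<exists>y. \<forall>g\<in>insert h (ga w0 ` B). \<bar>\<mu> g - g y\<bar> < e" using e by (intro ap)
      then show ?thesis using that by blast
    qed
    then have "h y < 2 * e" using muh by auto
    then obtain a where a: "a \<in> B" "dist y a < 2 * e" using infdist_lessE[OF B(2)] unfolding h_def by blast
    then have "\<bar>\<mu> (ga w0 a) - ga w0 a y\<bar> < e" using y by auto
    then have "F a < dist y a + e" unfolding F_def ga_def by auto
    then show ?thesis using a(2) unfolding e_def by (intro exI[of _ a]) auto
  qed
  obtain a where a: "\<And>n. F (a n) < inverse (real (Suc n))"
  proof -
    have "\<forall>n. \<exists>a. F a < inverse (real (Suc n))" using small by simp
    then have "\<exists>a. \<forall>n. F (a n) < inverse (real (Suc n))" by (rule choice)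
    then show ?thesis using that by blast
  qed
  have "Cauchy a"
  proof (rule metric_CauchyI)
    fix e :: real assume e: "0 < e"
    obtain M where M: "inverse (real (Suc M)) < e / 2" using reals_Archimedean[of "e / 2"] e by auto
    have "dist (a m) (a n) < e" if "m \<ge> M" "n \<ge> M" for m n
    proof -
      have "inverse (real (Suc m)) \<le> inverse (real (Suc M))" "inverse (real (Suc n)) \<le> inverse (real (Suc M))"
        using that by (auto simp: field_simps)
      then show ?thesis using tri[of "a m" "a n"] a[of m] a[of n] M by linarith
    qed
    then show "\<exists>M. \<forall>m\<ge>M. \<forall>n\<ge>M. dist (a m) (a n) < e" by blast
  qed
  then obtain y0 where y0: "a \<longlonglongrightarrow> y0" using Cauchy_convergent_iff convergent_def by blast
  have Fa0: "(\<lambda>n. F (a n)) \<longlonglongrightarrow> 0"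
  proof (rule tendsto_sandwich[OF _ _ tendsto_const LIMSEQ_inverse_real_of_nat])
    show "\<forall>\<^sub>F n in sequentially. 0 \<le> F (a n)" using Fnn by simp
    show "\<forall>\<^sub>F n in sequentially. F (a n) \<le> inverse (real (Suc n))"
      using a by (intro always_eventually allI less_imp_le)
  qed
  have "(\<lambda>n. dist (a n) y0) \<longlonglongrightarrow> dist y0 y0" by (intro tendsto_intros y0)
  then have "(\<lambda>n. F (a n) + dist (a n) y0) \<longlonglongrightarrow> 0" using tendsto_add[OF Fa0] by fastforce
  moreover have "F y0 \<le> F (a n) + dist (a n) y0" for n
  proof (rule field_le_epsilon)
    fix e :: real assume e: "0 < e"
    obtain y where y: "\<forall>c\<in>{y0, a n}. \<bar>F c - dist y c\<bar> < e/2" using Fap[of "{y0, a n}" "e/2"] e by (meson finite.emptyI finite_insert half_gt_zero)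
    have "dist y y0 \<le> dist y (a n) + dist (a n) y0" by (rule dist_triangle)
    moreover have ya: "\<bar>F y0 - dist y y0\<bar> < e/2" and yb: "\<bar>F (a n) - dist y (a n)\<bar> < e/2" using y by auto
    ultimately show "F y0 \<le> F (a n) + dist (a n) y0 + e"
      using abs_less_iff[THEN iffD1, OF ya] abs_less_iff[THEN iffD1, OF yb] by linarith
  qed
  ultimately have Fy0: "F y0 \<le> 0" by (intro LIMSEQ_le_const) auto
  show ?thesis
  proof (rule exI[of _ y0], rule ext)
    fix g
    show "\<mu> g = dirac w0 y0 g"
    proof (cases "g \<in> Lip0 w0")
      case False then show ?thesis using mu by (simp add: free_out dirac_def)
    next
      case True
      obtain K where K: "0 \<le> K" "\<And>x y. \<bar>g x - g y\<bar> \<le> K * dist x y" using Lip0ex[OF True] by blast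
      have "\<bar>\<mu> g - g y0\<bar> \<le> 0"
      proof (rule field_le_epsilon)
        fix e :: real assume e: "0 < e"
        define e' where "e' = e / (K + 1)"
        have e': "e' > 0" using e K unfolding e'_def by simp
        obtain y where y: "\<forall>f\<in>{g, ga w0 y0}. \<bar>\<mu> f - f y\<bar> < e'"
        proof -
          have "{g, ga w0 y0} \<subseteq> Lip0 w0" using True ga_Lip0 by blast
          then have "\<exists>y. \<forall>f\<in>{g, ga w0 y0}. \<bar>\<mu> f - f y\<bar> < e'" using e' by (intro ap) auto
          then show ?thesis using that by blast
        qed
        have "\<bar>F y0 - dist y y0\<bar> < e'" using y unfolding F_def ga_def by auto
        then have d: "dist y y0 < e'" using Fy0 by linarith
        have "\<bar>g y - g y0\<bar> \<le> K * e'" using K(2)[of y y0] d K(1)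
          by (meson less_imp_le mult_left_mono order_trans)
        moreover have "\<bar>\<mu> g - g y\<bar> < e'" using y by auto
        moreover have "K * e' + e' = e"
        proof -
          have "K + 1 \<noteq> 0" using K(1) by linarith
          then have "(K + 1) * e' = e" unfolding e'_def by simp
          then show ?thesis by (simp add: distrib_right)
        qed
        ultimately show "\<bar>\<mu> g - g y0\<bar> \<le> 0 + e" by linarith
      qed
      then show ?thesis using True by (simp add: dirac_Lip0)
    qed
  qed
qed


lemma dirac_inj: "dirac w0 a = dirac w0 b \<Longrightarrow> a = b"
proof -
  assume "dirac w0 a = dirac w0 b"
  then have "dirac w0 a (ga w0 b) = dirac w0 b (ga w0 b)" by simp
  then show "a = b" unfolding dirac_Lip0[OF ga_Lip0] by (simp add: ga_def)
qed

lemma dirac_base: "dirac z0 z0 = (\<lambda>_. 0)"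
  by (rule ext) (simp add: dirac_def Lip0_base)

lemma from_approx:
  fixes z0 :: "'a::metric_space" and w0 :: "'b::complete_space"
  assumes T: "bounded_op z0 w0 T"
   and ap: "\<And>x G \<epsilon>. finite G \<Longrightarrow> G \<subseteq> Lip0 w0 \<Longrightarrow> \<epsilon> > 0 \<Longrightarrow> \<exists>y. \<forall>g\<in>G. \<bar>T (dirac z0 x) g - g y\<bar> < \<epsilon>"
  shows "\<exists>f\<in>Lip0_maps z0 w0. is_hat z0 w0 f T"
proof -
  have Tfree: "T \<phi> \<in> free w0" if "\<phi> \<in> free z0" for \<phi> using T that unfolding bounded_op_def by blast
  have Tlin: "T (\<lambda>f. a * \<phi> f + b * \<psi> f) = (\<lambda>g. a * T \<phi> g + b * T \<psi> g)" if "\<phi> \<in> free z0" "\<psi> \<in> free z0" for \<phi> \<psi> a b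
    using T that unfolding bounded_op_def by blast
  obtain C where C: "\<And>\<phi>. \<phi> \<in> free z0 \<Longrightarrow> fnorm w0 (T \<phi>) \<le> C * fnorm z0 \<phi>" using T unfolding bounded_op_def by blast
  have "\<forall>x. \<exists>y. T (dirac z0 x) = dirac w0 y"
    using core[OF Tfree[OF dirac_free] ap] by blast
  then obtain f where f: "\<And>x. T (dirac z0 x) = dirac w0 (f x)" by metis
  have "T (\<lambda>_. 0) = T (\<lambda>h. 0 * dirac z0 z0 h + 0 * dirac z0 z0 h)" by simp
  also have "\<dots> = (\<lambda>_. 0)" by (subst Tlin) (auto intro: dirac_free)
  finally have "dirac w0 (f z0) = dirac w0 w0" using f[of z0] by (simp add: dirac_base)
  then have fz: "f z0 = w0" by (rule dirac_inj)
  have lip: "dist (f x) (f x') \<le> max C 0 * dist x x'" for x x'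
  proof -
    define \<phi> where "\<phi> = (\<lambda>h. 1 * dirac z0 x h + (-1) * dirac z0 x' h)"
    have \<phi>: "\<phi> \<in> free z0" unfolding \<phi>_def by (intro free_lin dirac_free)
    have T\<phi>: "T \<phi> = (\<lambda>g. 1 * dirac w0 (f x) g + (-1) * dirac w0 (f x') g)"
      unfolding \<phi>_def by (subst Tlin) (auto intro: dirac_free simp: f)
    have "\<bar>T \<phi> (ga w0 (f x'))\<bar> \<le> fnorm w0 (T \<phi>)" by (rule fnorm_ge[OF Tfree[OF \<phi>] ga_Lip0 ga_lipnorm])
    then have d1: "dist (f x) (f x') \<le> fnorm w0 (T \<phi>)" unfolding T\<phi> dirac_Lip0[OF ga_Lip0] by (simp add: ga_def)
    have d2: "fnorm z0 \<phi> \<le> dist x x'"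
      unfolding fnorm_def
    proof (rule cSup_least)
      show "{\<bar>\<phi> f\<bar> |f. f \<in> Lip0 z0 \<and> lipnorm f \<le> 1} \<noteq> {}" using Lip0_zero lipnorm_zero by blast
    next
      fix r assume "r \<in> {\<bar>\<phi> f\<bar> |f. f \<in> Lip0 z0 \<and> lipnorm f \<le> 1}"
      then obtain g where g: "g \<in> Lip0 z0" "lipnorm g \<le> 1" "r = \<bar>\<phi> g\<bar>" by blast
      have "\<bar>g x - g x'\<bar> \<le> lipnorm g * dist x x'" by (rule lipnorm_le[OF g(1)])
      also have "\<dots> \<le> 1 * dist x x'" by (rule mult_right_mono[OF g(2)]) auto
      finally show "r \<le> dist x x'" using g unfolding \<phi>_def by (simp add: dirac_Lip0)
    qed
    have "fnorm w0 (T \<phi>) \<le> C * fnorm z0 \<phi>" by (rule C[OF \<phi>])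
    also have "\<dots> \<le> max C 0 * fnorm z0 \<phi>" using fnorm_nonneg[OF \<phi>] by (intro mult_right_mono) auto
    also have "\<dots> \<le> max C 0 * dist x x'" using d2 by (intro mult_left_mono) auto
    finally show ?thesis using d1 by linarith
  qed
  show ?thesis
  proof (rule bexI[of _ f])
    show "is_hat z0 w0 f T" unfolding is_hat_def using T f by blast
    show "f \<in> Lip0_maps z0 w0" unfolding Lip0_maps_def
      using fz lip by (auto intro!: exI[of _ "max C 0"] lipschitz_onI)
  qed
qed

theorem corollary6p4:
  fixes z0 :: "'a::complete_space" and w0 :: "'b::complete_space"
  shows "(\<forall>T. bounded_op z0 w0 T \<and> in_WOT_closure_hat z0 w0 T
            \<longrightarrow> (\<exists>f\<in>Lip0_maps z0 w0. is_hat z0 w0 f T))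
       \<and> (\<forall>T. bounded_op z0 w0 T \<and> in_SOT_closure_hat z0 w0 T
            \<longrightarrow> (\<exists>f\<in>Lip0_maps z0 w0. is_hat z0 w0 f T))"
proof (intro conjI allI impI; elim conjE)
  fix T assume T: "bounded_op z0 w0 T" and W: "in_WOT_closure_hat z0 w0 T"
  show "\<exists>f\<in>Lip0_maps z0 w0. is_hat z0 w0 f T"
  proof (rule from_approx[OF T])
    fix x G and \<epsilon> :: real assume G: "finite G" "G \<subseteq> Lip0 w0" and e: "\<epsilon> > 0"
    define P where "P = (\<lambda>g. (dirac z0 x, \<lambda>\<phi>::'b functional. \<phi> g)) ` G"
    have "finite P \<and> P \<subseteq> free z0 \<times> free_dual w0 \<and> \<epsilon> > 0"
      unfolding P_def using G e by (auto intro: dirac_free eval_dual)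
    then have "\<exists>f S. f \<in> Lip0_maps z0 w0 \<and> is_hat z0 w0 f S \<and> (\<forall>(\<phi>, y)\<in>P. \<bar>y (T \<phi>) - y (S \<phi>)\<bar> < \<epsilon>)"
      using W unfolding in_WOT_closure_hat_def by (elim allE[of _ P] allE[of _ \<epsilon>] impE)
    then obtain f S where fS: "is_hat z0 w0 f S" "\<forall>(\<phi>, y)\<in>P. \<bar>y (T \<phi>) - y (S \<phi>)\<bar> < \<epsilon>"
      by (elim exE conjE) simp
    have "\<bar>T (dirac z0 x) g - g (f x)\<bar> < \<epsilon>" if "g \<in> G" for g
    proof -
      have "\<bar>T (dirac z0 x) g - S (dirac z0 x) g\<bar> < \<epsilon>" using fS(2) that unfolding P_def by auto
      moreover have "S (dirac z0 x) g = g (f x)" using fS(1) G that unfolding is_hat_def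
        by (auto simp: dirac_Lip0)
      ultimately show ?thesis by simp
    qed
    then show "\<exists>y. \<forall>g\<in>G. \<bar>T (dirac z0 x) g - g y\<bar> < \<epsilon>" by blast
  qed
next
  fix T assume T: "bounded_op z0 w0 T" and W: "in_SOT_closure_hat z0 w0 T"
  show "\<exists>f\<in>Lip0_maps z0 w0. is_hat z0 w0 f T"
  proof (rule from_approx[OF T])
    fix x G and \<epsilon> :: real assume G: "finite G" "G \<subseteq> Lip0 w0" and e: "\<epsilon> > 0"
    define L where "L = (\<Sum>g\<in>G. lipnorm g)"
    have Lg: "lipnorm g \<le> L" if "g \<in> G" for g
      unfolding L_def using G that by (intro member_le_sum) (auto intro: lipnorm_nonneg)
    have L0: "0 \<le> L" unfolding L_def using G by (intro sum_nonneg) (auto intro: lipnorm_nonneg)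
    define e' where "e' = \<epsilon> / (L + 1)"
    have e': "e' > 0" using e L0 unfolding e'_def by simp
    have Le: "L * e' < \<epsilon>" using e L0 unfolding e'_def by (simp add: field_simps)
    obtain f S where fS: "is_hat z0 w0 f S" "\<forall>\<phi>\<in>{dirac z0 x}. fnorm w0 (\<lambda>g. T \<phi> g - S \<phi> g) < e'"
    proof -
      have "finite {dirac z0 x} \<and> {dirac z0 x} \<subseteq> free z0 \<and> e' > 0" using e' dirac_free by auto
      then have "\<exists>f S. f \<in> Lip0_maps z0 w0 \<and> is_hat z0 w0 f S \<and> (\<forall>\<phi>\<in>{dirac z0 x}. fnorm w0 (\<lambda>g. T \<phi> g - S \<phi> g) < e')"
        using W unfolding in_SOT_closure_hat_def by (elim allE[of _ "{dirac z0 x}"] allE[of _ e'] impE)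
      then show ?thesis using that by (elim exE conjE) simp
    qed
    define \<nu> where "\<nu> = (\<lambda>g. T (dirac z0 x) g - S (dirac z0 x) g)"
    have TS: "T (dirac z0 x) \<in> free w0" "S (dirac z0 x) \<in> free w0"
      using T fS(1) dirac_free unfolding is_hat_def bounded_op_def by blast+
    have "(\<lambda>g. 1 * T (dirac z0 x) g + (-1) * S (dirac z0 x) g) \<in> free w0" by (intro free_lin TS)
    then have \<nu>: "\<nu> \<in> free w0" unfolding \<nu>_def by simp
    have fn: "fnorm w0 \<nu> < e'" using fS(2) unfolding \<nu>_def by simp
    have "\<bar>T (dirac z0 x) g - g (f x)\<bar> < \<epsilon>" if "g \<in> G" for g
    proof -
      have gL: "g \<in> Lip0 w0" using G that by auto
      have "\<bar>\<nu> g\<bar> \<le> lipnorm g * fnorm w0 \<nu>" by (rule free_eval_le[OF \<nu> gL])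
      also have "\<dots> \<le> L * e'" using Lg[OF that] fn fnorm_nonneg[OF \<nu>] L0
        by (intro mult_mono) auto
      finally have "\<bar>\<nu> g\<bar> < \<epsilon>" using Le by linarith
      moreover have "S (dirac z0 x) g = g (f x)" using fS(1) gL unfolding is_hat_def
        by (auto simp: dirac_Lip0)
      ultimately show ?thesis unfolding \<nu>_def by simp
    qed
    then show "\<exists>y. \<forall>g\<in>G. \<bar>T (dirac z0 x) g - g y\<bar> < \<epsilon>" by blast
  qed
qed

end
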